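(* Let $K\subseteq\mathbb{R}^n$ be nonempty, compact and convex, and let $F:K\to\mathbb{R}^n$ be continuously differentiable ($C^1$) and monotone, i.e. $(x-y)^T(F(x)-F(y))\ge 0$ for all $x,y\in K$. Consider the best response dynamics $$\dot x(t)\in \beta(F(x(t)))-x(t),\qquad t\ge 0,\qquad \text{where } \beta(\pi)=\arg\min_{y\in K} y^T\pi .$$ Then the solution set $SOL(K,F)$ of the variational inequality $VI(K,F)$ is globally asymptotically stable (on $K$) under these dynamics.
   Context: The variational inequality $VI(K,F)$: a point $x\in K$ solves it if $(y-x)^TF(x)\ge 0$ for all $y\in K$; $SOL(K,F)$ denotes the set of all solutions. The best response map $\beta(\pi)=\arg\min_{y\in K}y^T\pi$ is set-valued. Solutions of the differential inclusion are understood in the Carathéodory sense (absolutely continuous functions $x:[0,\infty)\to K$ satisfying the inclusion for almost every $t$), with initial conditions $x(0)\in K$; the set $K$ is invariant under the dynamics. *)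

theory Defs
  imports "HOL-Analysis.Analysis"
begin

definition abs_cont_on :: "real set \<Rightarrow> (real \<Rightarrow> 'a::real_normed_vector) \<Rightarrow> bool" where
  "abs_cont_on S x \<longleftrightarrow>
     (\<forall>e>0. \<exists>d>0. \<forall>(m::nat) (a::nat \<Rightarrow> real) b.
        (\<forall>i<m. a i \<le> b i \<and> {a i..b i} \<subseteq> S) \<and>
        (\<forall>i<m. \<forall>j<m. i \<noteq> j \<longrightarrow> b i \<le> a j \<or> b j \<le> a i) \<and>
        (\<Sum>i<m. b i - a i) < d
        \<longrightarrow> (\<Sum>i<m. norm (x (b i) - x (a i))) < e)"

definition best_response :: "(real^'n) set \<Rightarrow> real^'n \<Rightarrow> (real^'n) set" where
  "best_response K p = {y \<in> K. \<forall>z\<in>K. y \<bullet> p \<le> z \<bullet> p}"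

definition SOL :: "(real^'n) set \<Rightarrow> (real^'n \<Rightarrow> real^'n) \<Rightarrow> (real^'n) set" where
  "SOL K F = {x \<in> K. \<forall>y\<in>K. (y - x) \<bullet> F x \<ge> 0}"

definition C1_on :: "(real^'n) set \<Rightarrow> (real^'n \<Rightarrow> real^'n) \<Rightarrow> bool" where
  "C1_on K F \<longleftrightarrow> (\<exists>U G (G' :: (real^'n) \<Rightarrow> ((real^'n) \<Rightarrow>\<^sub>L (real^'n))).
      open U \<and> K \<subseteq> U \<and> (\<forall>x\<in>K. G x = F x) \<and>
      (\<forall>x\<in>U. (G has_derivative blinfun_apply (G' x)) (at x)) \<and>
      continuous_on U G')"

definition monotone_on_K :: "(real^'n) set \<Rightarrow> (real^'n \<Rightarrow> real^'n) \<Rightarrow> bool" where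
  "monotone_on_K K F \<longleftrightarrow> (\<forall>x\<in>K. \<forall>y\<in>K. (x - y) \<bullet> (F x - F y) \<ge> 0)"

definition BR_solution :: "(real^'n) set \<Rightarrow> (real^'n \<Rightarrow> real^'n) \<Rightarrow> (real \<Rightarrow> real^'n) \<Rightarrow> bool" where
  "BR_solution K F x \<longleftrightarrow>
     (\<forall>t\<ge>0. x t \<in> K) \<and>
     (\<forall>T\<ge>0. abs_cont_on {0..T} x) \<and>
     (\<exists>N. N \<in> null_sets lborel \<and>
        (\<forall>t. t \<ge> 0 \<and> t \<notin> N \<longrightarrow>
           (\<exists>v. (x has_vector_derivative v) (at t within {0..}) \<and>
                v \<in> (\<lambda>y. y - x t) ` best_response K (F (x t)))))"

definition BR_GAS :: "(real^'n) set \<Rightarrow> (real^'n \<Rightarrow> real^'n) \<Rightarrow> (real^'n) set \<Rightarrow> bool" where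
  "BR_GAS K F A \<longleftrightarrow>
     (\<forall>e>0. \<exists>d>0. \<forall>x. BR_solution K F x \<and> infdist (x 0) A < d \<longrightarrow>
         (\<forall>t\<ge>0. infdist (x t) A < e)) \<and>
     (\<forall>x. BR_solution K F x \<longrightarrow> ((\<lambda>t. infdist (x t) A) \<longlongrightarrow> 0) at_top)"

end

theory Submission
  imports Defs
begin

lemma abs_cont_onD:
  assumes "abs_cont_on S f" "e > 0"
  obtains d where "d > 0" "\<And>(m::nat) a b. (\<forall>i<m. a i \<le> b i \<and> {a i..b i} \<subseteq> S) \<Longrightarrow>
        (\<forall>i<m. \<forall>j<m. i \<noteq> j \<longrightarrow> b i \<le> a j \<or> b j \<le> a i) \<Longrightarrow>
        (\<Sum>i<m. b i - a i) < d \<Longrightarrow> (\<Sum>i<m. norm (f (b i) - f (a i))) < e"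
proof -
  from assms obtain d where d: "d>0" and H: "\<forall>(m::nat) a b. (\<forall>i<m. a i \<le> b i \<and> {a i..b i} \<subseteq> S) \<and>
        (\<forall>i<m. \<forall>j<m. i \<noteq> j \<longrightarrow> b i \<le> a j \<or> b j \<le> a i) \<and>
        (\<Sum>i<m. b i - a i) < d \<longrightarrow> (\<Sum>i<m. norm (f (b i) - f (a i))) < e"
    unfolding abs_cont_on_def by blast
  show ?thesis
  proof (rule that[OF d])
    fix m :: nat and a b :: "nat \<Rightarrow> real" assume A1: "\<forall>i<m. a i \<le> b i \<and> {a i..b i} \<subseteq> S"
       and A2: "\<forall>i<m. \<forall>j<m. i \<noteq> j \<longrightarrow> b i \<le> a j \<or> b j \<le> a i" and A3: "(\<Sum>i<m. b i - a i) < d"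
    show "(\<Sum>i<m. norm (f (b i) - f (a i))) < e" by (rule H[rule_format, OF conjI[OF A1 conjI[OF A2 A3]]])
  qed
qed

lemma abs_cont_onD2:
  assumes "abs_cont_on S f" "e > 0"
  shows "\<exists>d>0. \<forall>(m::nat) a b. (\<forall>i<m. a i \<le> b i \<and> {a i..b i} \<subseteq> S) \<and>
        (\<forall>i<m. \<forall>j<m. i \<noteq> j \<longrightarrow> b i \<le> a j \<or> b j \<le> a i) \<and>
        (\<Sum>i<m. b i - a i) < d \<longrightarrow> (\<Sum>i<m. norm (f (b i) - f (a i))) < e"
  using assms unfolding abs_cont_on_def by blast

lemma acH: "\<forall>(m::nat) a b. A m a b \<and> B m a b \<and> C m a b \<longrightarrow> D m a b \<Longrightarrow> A m a b \<Longrightarrow> B m a b \<Longrightarrow> C m a b \<Longrightarrow> D m a b"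
  by blast

lemma abs_cont_onI:
  assumes "\<And>e. e > 0 \<Longrightarrow> \<exists>d>0. \<forall>(m::nat) a b. (\<forall>i<m. a i \<le> b i \<and> {a i..b i} \<subseteq> S) \<and>
        (\<forall>i<m. \<forall>j<m. i \<noteq> j \<longrightarrow> b i \<le> a j \<or> b j \<le> a i) \<and>
        (\<Sum>i<m. b i - a i) < d \<longrightarrow> (\<Sum>i<m. norm (f (b i) - f (a i))) < e"
  shows "abs_cont_on S f"
  unfolding abs_cont_on_def by (intro allI impI) (rule assms)

lemma abs_cont_subset:
  assumes "abs_cont_on S f" "T \<subseteq> S" shows "abs_cont_on T f"
proof (rule abs_cont_onI)
  fix e :: real assume e: "e > 0"
  obtain d where d: "d>0" and H: "\<forall>(m::nat) \<alpha> \<beta>. (\<forall>i<m. \<alpha> i \<le> \<beta> i \<and> {\<alpha> i..\<beta> i} \<subseteq> S) \<and>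
        (\<forall>i<m. \<forall>j<m. i \<noteq> j \<longrightarrow> \<beta> i \<le> \<alpha> j \<or> \<beta> j \<le> \<alpha> i) \<and>
        (\<Sum>i<m. \<beta> i - \<alpha> i) < d \<longrightarrow> (\<Sum>i<m. norm (f (\<beta> i) - f (\<alpha> i))) < e"
    using abs_cont_onD2[OF assms(1) e] by blast
  show "\<exists>d>0. \<forall>(m::nat) a b. (\<forall>i<m. a i \<le> b i \<and> {a i..b i} \<subseteq> T) \<and>
        (\<forall>i<m. \<forall>j<m. i \<noteq> j \<longrightarrow> b i \<le> a j \<or> b j \<le> a i) \<and>
        (\<Sum>i<m. b i - a i) < d \<longrightarrow> (\<Sum>i<m. norm (f (b i) - f (a i))) < e"
  proof (intro exI[of _ d] conjI allI impI d)
    fix m :: nat and \<alpha> \<beta> :: "nat \<Rightarrow> real"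
    assume A: "(\<forall>i<m. \<alpha> i \<le> \<beta> i \<and> {\<alpha> i..\<beta> i} \<subseteq> T) \<and>
        (\<forall>i<m. \<forall>j<m. i \<noteq> j \<longrightarrow> \<beta> i \<le> \<alpha> j \<or> \<beta> j \<le> \<alpha> i) \<and> (\<Sum>i<m. \<beta> i - \<alpha> i) < d"
    show "(\<Sum>i<m. norm (f (\<beta> i) - f (\<alpha> i))) < e"
      apply (rule acH[OF H]) using A assms(2) by auto
  qed
qed

lemma abs_cont_imp_continuous:
  assumes "abs_cont_on {a..b} f" shows "continuous_on {a..b} f"
  unfolding continuous_on_iff
proof (intro ballI allI impI)
  fix t e :: real assume t: "t \<in> {a..b}" and e: "0 < e"
  obtain d where d: "d>0" and H: "\<forall>(m::nat) \<alpha> \<beta>. (\<forall>i<m. \<alpha> i \<le> \<beta> i \<and> {\<alpha> i..\<beta> i} \<subseteq> {a..b}) \<and>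
        (\<forall>i<m. \<forall>j<m. i \<noteq> j \<longrightarrow> \<beta> i \<le> \<alpha> j \<or> \<beta> j \<le> \<alpha> i) \<and>
        (\<Sum>i<m. \<beta> i - \<alpha> i) < d \<longrightarrow> (\<Sum>i<m. norm (f (\<beta> i) - f (\<alpha> i))) < e"
    using abs_cont_onD2[OF assms e] by blast
  show "\<exists>d>0. \<forall>x'\<in>{a..b}. dist x' t < d \<longrightarrow> dist (f x') (f t) < e"
  proof (intro exI[of _ d] conjI ballI impI d)
    fix s assume s: "s \<in> {a..b}" "dist s t < d"
    have "(\<Sum>i<(1::nat). norm (f ((\<lambda>_. max s t) i) - f ((\<lambda>_. min s t) i))) < e"
      by (rule acH[OF H]) (use s t in \<open>auto simp: dist_real_def\<close>)
    then show "dist (f s) (f t) < e"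
      by (cases "s \<le> t") (simp_all add: dist_norm norm_minus_commute max_def min_def)
  qed
qed

lemma abs_cont_minus_linear:
  fixes f :: "real \<Rightarrow> real"
  assumes "abs_cont_on S f" shows "abs_cont_on S (\<lambda>s. f s - c * s)"
proof (rule abs_cont_onI)
  fix e :: real assume e: "e > 0"
  obtain d where d: "d>0" and H: "\<forall>(m::nat) \<alpha> \<beta>. (\<forall>i<m. \<alpha> i \<le> \<beta> i \<and> {\<alpha> i..\<beta> i} \<subseteq> S) \<and>
        (\<forall>i<m. \<forall>j<m. i \<noteq> j \<longrightarrow> \<beta> i \<le> \<alpha> j \<or> \<beta> j \<le> \<alpha> i) \<and>
        (\<Sum>i<m. \<beta> i - \<alpha> i) < d \<longrightarrow> (\<Sum>i<m. norm (f (\<beta> i) - f (\<alpha> i))) < e/2"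
    using abs_cont_onD2[OF assms, of "e/2"] e by (auto simp del: half_gt_zero_iff)
  define d' where "d' = min d (e / (2 * (\<bar>c\<bar> + 1)))"
  have d': "d' > 0" using d e by (simp add: d'_def)
  show "\<exists>d>0. \<forall>(m::nat) a b. (\<forall>i<m. a i \<le> b i \<and> {a i..b i} \<subseteq> S) \<and>
        (\<forall>i<m. \<forall>j<m. i \<noteq> j \<longrightarrow> b i \<le> a j \<or> b j \<le> a i) \<and>
        (\<Sum>i<m. b i - a i) < d \<longrightarrow> (\<Sum>i<m. norm (f (b i) - c * b i - (f (a i) - c * a i))) < e"
  proof (intro exI[of _ d'] conjI allI impI d')
    fix m :: nat and \<alpha> \<beta> :: "nat \<Rightarrow> real"
    assume A: "(\<forall>i<m. \<alpha> i \<le> \<beta> i \<and> {\<alpha> i..\<beta> i} \<subseteq> S) \<and>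
        (\<forall>i<m. \<forall>j<m. i \<noteq> j \<longrightarrow> \<beta> i \<le> \<alpha> j \<or> \<beta> j \<le> \<alpha> i) \<and> (\<Sum>i<m. \<beta> i - \<alpha> i) < d'"
    have s1: "(\<Sum>i<m. norm (f (\<beta> i) - f (\<alpha> i))) < e/2"
      using A by (intro acH[OF H]) (auto simp: d'_def)
    have s2: "(\<Sum>i<m. \<beta> i - \<alpha> i) \<le> e / (2 * (\<bar>c\<bar> + 1))"
      using A by (simp add: d'_def)
    have "(\<Sum>i<m. norm (f (\<beta> i) - c * \<beta> i - (f (\<alpha> i) - c * \<alpha> i)))
        \<le> (\<Sum>i<m. norm (f (\<beta> i) - f (\<alpha> i)) + \<bar>c\<bar> * (\<beta> i - \<alpha> i))"
    proof (rule sum_mono)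
      fix i assume "i \<in> {..<m}"
      then have "\<alpha> i \<le> \<beta> i" using A by auto
      have "norm (f (\<beta> i) - c * \<beta> i - (f (\<alpha> i) - c * \<alpha> i)) = \<bar>(f (\<beta> i) - f (\<alpha> i)) - c * (\<beta> i - \<alpha> i)\<bar>"
        by (simp add: algebra_simps)
      also have "\<dots> \<le> \<bar>f (\<beta> i) - f (\<alpha> i)\<bar> + \<bar>c * (\<beta> i - \<alpha> i)\<bar>" by (rule abs_triangle_ineq4)
      also have "\<bar>c * (\<beta> i - \<alpha> i)\<bar> = \<bar>c\<bar> * (\<beta> i - \<alpha> i)" using \<open>\<alpha> i \<le> \<beta> i\<close> by (simp add: abs_mult)
      finally show "norm (f (\<beta> i) - c * \<beta> i - (f (\<alpha> i) - c * \<alpha> i)) \<le> norm (f (\<beta> i) - f (\<alpha> i)) + \<bar>c\<bar> * (\<beta> i - \<alpha> i)"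
        by simp
    qed
    also have "\<dots> = (\<Sum>i<m. norm (f (\<beta> i) - f (\<alpha> i))) + \<bar>c\<bar> * (\<Sum>i<m. \<beta> i - \<alpha> i)"
      by (simp add: sum.distrib sum_distrib_left)
    also have "\<bar>c\<bar> * (\<Sum>i<m. \<beta> i - \<alpha> i) \<le> \<bar>c\<bar> * (e / (2 * (\<bar>c\<bar> + 1)))"
      by (rule mult_left_mono[OF s2]) simp
    also have "\<dots> \<le> e/2" using e by (simp add: field_simps)
    finally show "(\<Sum>i<m. norm (f (\<beta> i) - c * \<beta> i - (f (\<alpha> i) - c * \<alpha> i))) < e" using s1 by linarith
  qed
qed

lemma component_interval:
  fixes U :: "real set"
  assumes "open U" "U \<subseteq> {a<..<b}" "C \<in> components U"
  shows "Inf C < Sup C" "C = {Inf C<..<Sup C}" "a \<le> Inf C" "Sup C \<le> b"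
    and "\<And>x. x \<in> C \<longleftrightarrow> Inf C < x \<and> x < Sup C"
proof -
  have ne: "C \<noteq> {}" using in_components_nonempty assms(3) by blast
  have sub: "C \<subseteq> {a<..<b}" using in_components_subset[OF assms(3)] assms(2) by blast
  have op: "open C" using open_components assms by blast
  have iv: "is_interval C" using in_components_connected[OF assms(3)] is_interval_connected_1 by blast
  have sub2: "a < x \<and> x < b" if "x \<in> C" for x using sub that by (meson greaterThanLessThan_iff subsetD)
  have bb: "bdd_below C" "bdd_above C"
  proof -
    show "bdd_below C" by (rule bdd_belowI[of _ a]) (use sub2 in \<open>meson less_imp_le\<close>)
    show "bdd_above C" by (rule bdd_aboveI[of _ b]) (use sub2 in \<open>meson less_imp_le\<close>)
  qed
  have lo: "Inf C < x" if xC: "x \<in> C" for x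
  proof -
    obtain e where e: "e>0" "ball x e \<subseteq> C" using openE[OF op xC] by blast
    have "x - e/2 \<in> ball x e" using e(1) by (simp add: dist_real_def)
    then have "x - e/2 \<in> C" using e(2) by blast
    then have "Inf C \<le> x - e/2" using cInf_lower bb by blast
    then show ?thesis using e by linarith
  qed
  have hi: "x < Sup C" if xC: "x \<in> C" for x
  proof -
    obtain e where e: "e>0" "ball x e \<subseteq> C" using openE[OF op xC] by blast
    have "x + e/2 \<in> ball x e" using e(1) by (simp add: dist_real_def)
    then have "x + e/2 \<in> C" using e(2) by blast
    then have "x + e/2 \<le> Sup C" using cSup_upper bb by blast
    then show ?thesis using e by linarith
  qed
  show eq: "C = {Inf C<..<Sup C}"
  proof
    show "C \<subseteq> {Inf C<..<Sup C}" using lo hi by auto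
    show "{Inf C<..<Sup C} \<subseteq> C"
    proof
      fix y assume y: "y \<in> {Inf C<..<Sup C}"
      obtain c1 where c1: "c1 \<in> C" "c1 < y" using y cInf_less_iff[OF ne bb(1)] by auto
      obtain c2 where c2: "c2 \<in> C" "y < c2" using y less_cSup_iff[OF ne bb(2)] by auto
      show "y \<in> C" using iv[unfolded is_interval_1] c1 c2 by (meson less_imp_le)
    qed
  qed
  show "\<And>x. x \<in> C \<longleftrightarrow> Inf C < x \<and> x < Sup C"
    by (subst eq) simp
  from ne obtain x where x: "x \<in> C" by blast
  show "Inf C < Sup C" using lo[OF x] hi[OF x] by linarith
  show "a \<le> Inf C" by (rule cInf_greatest[OF ne]) (use sub in auto)
  show "Sup C \<le> b" by (rule cSup_least[OF ne]) (use sub in auto)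
qed

lemma components_sep:
  fixes U :: "real set"
  assumes "open U" "U \<subseteq> {a<..<b}" "C \<in> components U" "C' \<in> components U" "C \<noteq> C'"
  shows "Sup C \<le> Inf C' \<or> Sup C' \<le> Inf C"
proof (rule ccontr)
  assume A: "\<not> ?thesis"
  define z where "z = (max (Inf C) (Inf C') + min (Sup C) (Sup C'))/2"
  note i1 = component_interval[OF assms(1,2,3)] and i2 = component_interval[OF assms(1,2,4)]
  have "z \<in> C" using A i1(1) i2(1) unfolding z_def i1(5)
    by (auto simp: max_def min_def)
  moreover have "z \<in> C'" using A i1(1) i2(1) unfolding z_def i2(5)
    by (auto simp: max_def min_def)
  ultimately show False using components_eq[OF assms(3,4)] assms(5) by blast
qed

lemma lusin_N:
  fixes f :: "real \<Rightarrow> real"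
  assumes ac: "abs_cont_on {a..b} f" and N: "negligible N"
  shows "negligible (f ` (N \<inter> {a..b}))"
proof -
  have cont: "continuous_on {a..b} f" by (rule abs_cont_imp_continuous[OF ac])
  define N' where "N' = N \<inter> {a<..<b}"
  have negN': "negligible N'" using N negligible_subset[of N N'] by (auto simp: N'_def)
  have main: "negligible (f ` N')"
    unfolding negligible_outer_le
  proof (intro allI impI)
    fix e :: real assume e: "e > 0"
    obtain d where d: "d>0" and H: "\<forall>(m::nat) \<alpha> \<beta>. (\<forall>i<m. \<alpha> i \<le> \<beta> i \<and> {\<alpha> i..\<beta> i} \<subseteq> {a..b}) \<and>
        (\<forall>i<m. \<forall>j<m. i \<noteq> j \<longrightarrow> \<beta> i \<le> \<alpha> j \<or> \<beta> j \<le> \<alpha> i) \<and>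
        (\<Sum>i<m. \<beta> i - \<alpha> i) < d \<longrightarrow> (\<Sum>i<m. norm (f (\<beta> i) - f (\<alpha> i))) < e"
      using abs_cont_onD2[OF ac e] by blast
    have N'sets: "N' \<in> sets lebesgue" using negN' negligible_iff_null_sets null_setsD2 by blast
    obtain T where T: "open T" "N' \<subseteq> T" "(T - N') \<in> lmeasurable" "emeasure lebesgue (T - N') < ennreal d"
      using sets_lebesgue_outer_open[OF N'sets d] by metis
    define U where "U = T \<inter> {a<..<b}"
    have U: "open U" "U \<subseteq> {a<..<b}" "N' \<subseteq> U" using T by (auto simp: U_def N'_def)
    have bU: "bounded U"
      by (rule bounded_subset[of "{a..b}"]) (use U in \<open>auto intro: compact_imp_bounded\<close>)
    have Ulm: "U \<in> lmeasurable" using lmeasurable_open[OF bU U(1)] .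
    have mU: "measure lebesgue U < d"
    proof -
      have N'lm: "N' \<in> lmeasurable" using negligible_imp_measurable[OF negN'] .
      have "measure lebesgue U \<le> measure lebesgue ((T - N') \<union> N')"
      proof (rule measure_mono_fmeasurable)
        show "U \<subseteq> (T - N') \<union> N'" by (auto simp: U_def)
        show "U \<in> sets lebesgue" using Ulm by (rule fmeasurableD)
        show "(T - N') \<union> N' \<in> fmeasurable lebesgue" by (rule fmeasurable.Un[OF T(3) N'lm])
      qed
      also have "\<dots> \<le> measure lebesgue (T - N') + measure lebesgue N'"
        by (rule measure_Un_le) (use T N'lm in auto)
      also have "measure lebesgue N' = 0" using negligible_imp_measure0[OF negN'] .
      also have "measure lebesgue (T - N') < d"
      proof -
        have "ennreal (measure lebesgue (T - N')) < ennreal d"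
          using T(3,4) by (simp add: emeasure_eq_measure2)
        then show ?thesis by (simp add: ennreal_less_iff)
      qed
      finally show ?thesis by simp
    qed
    define \<C> where "\<C> = components U"
    have cnt: "countable \<C>"
      unfolding \<C>_def
    proof (rule countable_disjoint_open_subsets)
      show "open S" if "S \<in> components U" for S using open_components[OF U(1) that] .
      show "pairwise disjnt (components U)"
        using pairwise_disjoint_components[of U] unfolding pairwise_def disjnt_def by blast
    qed
    note ci = component_interval[OF U(1) U(2)]
    have ex: "\<forall>C\<in>\<C>. \<exists>p. \<exists>q. p \<in> {Inf C..Sup C} \<and> q \<in> {Inf C..Sup C} \<and>
                 (\<forall>y\<in>{Inf C..Sup C}. f p \<le> f y \<and> f y \<le> f q)"
    proof
      fix C assume C: "C \<in> \<C>"
      have sub: "{Inf C..Sup C} \<subseteq> {a..b}" using ci(3,4)[OF C[unfolded \<C>_def]] by auto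
      have ne: "{Inf C..Sup C} \<noteq> {}" using ci(1)[OF C[unfolded \<C>_def]] by auto
      have cc: "continuous_on {Inf C..Sup C} f" using continuous_on_subset[OF cont sub] .
      obtain p where "p \<in> {Inf C..Sup C}" "\<forall>y\<in>{Inf C..Sup C}. f p \<le> f y"
        using continuous_attains_inf[OF compact_Icc ne cc] by blast
      moreover obtain q where "q \<in> {Inf C..Sup C}" "\<forall>y\<in>{Inf C..Sup C}. f y \<le> f q"
        using continuous_attains_sup[OF compact_Icc ne cc] by blast
      ultimately show "\<exists>p. \<exists>q. p \<in> {Inf C..Sup C} \<and> q \<in> {Inf C..Sup C} \<and>
                 (\<forall>y\<in>{Inf C..Sup C}. f p \<le> f y \<and> f y \<le> f q)" by blast
    qed
    from bchoice[OF ex] obtain p where "\<forall>C\<in>\<C>. \<exists>q. p C \<in> {Inf C..Sup C} \<and> q \<in> {Inf C..Sup C} \<and>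
                 (\<forall>y\<in>{Inf C..Sup C}. f (p C) \<le> f y \<and> f y \<le> f q)"
      by (elim exE)
    from bchoice[OF this] obtain q where pq: "\<forall>C\<in>\<C>. p C \<in> {Inf C..Sup C} \<and> q C \<in> {Inf C..Sup C} \<and>
                 (\<forall>y\<in>{Inf C..Sup C}. f (p C) \<le> f y \<and> f y \<le> f (q C))"
      by (elim exE)
    define J where "J C = {f (p C) .. f (q C)}" for C
    have pqle: "f (p C) \<le> f (q C)" if "C \<in> \<C>" for C using pq that by blast
    have cover: "f ` N' \<subseteq> (\<Union>C\<in>\<C>. J C)"
    proof
      fix z assume "z \<in> f ` N'"
      then obtain x where x: "x \<in> N'" "z = f x" by blast
      then have "x \<in> \<Union>\<C>" using U(3) by (auto simp: \<C>_def)
      then obtain C where C: "C \<in> \<C>" "x \<in> C" by blast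
      have "x \<in> {Inf C..Sup C}" using C(2) unfolding ci(5)[OF C(1)[unfolded \<C>_def]] by auto
      then have "z \<in> J C" using pq C x by (auto simp: J_def)
      then show "z \<in> (\<Union>C\<in>\<C>. J C)" using C by blast
    qed
    have bound: "measure lebesgue (\<Union>C\<in>\<C>'. J C) \<le> e" if sub: "\<C>' \<subseteq> \<C>" "finite \<C>'" for \<C>'
    proof -
      have "measure lebesgue (\<Union>C\<in>\<C>'. J C) \<le> (\<Sum>C\<in>\<C>'. measure lebesgue (J C))"
        by (rule measure_UNION_le) (use that in \<open>auto simp: J_def\<close>)
      also have "\<dots> = (\<Sum>C\<in>\<C>'. f (q C) - f (p C))"
        by (rule sum.cong) (use pqle sub in \<open>auto simp: J_def\<close>)
      also have "\<dots> < e"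
      proof -
        obtain g where g: "bij_betw g {0..<card \<C>'} \<C>'" using ex_bij_betw_nat_finite[OF sub(2)] by blast
        define m where "m = card \<C>'"
        have gC: "g i \<in> \<C>" if "i < m" for i using g that sub(1) by (auto simp: m_def bij_betw_def)
        have ginj: "g i \<noteq> g j" if "i < m" "j < m" "i \<noteq> j" for i j
          using g that by (auto simp: m_def bij_betw_def inj_on_def)
        have reidx: "(\<Sum>C\<in>\<C>'. h C) = (\<Sum>i<m. h (g i))" for h :: "real set \<Rightarrow> real"
          using sum.reindex_bij_betw[OF g, of h] by (simp add: m_def atLeast0LessThan)
        define \<alpha> where "\<alpha> i = min (p (g i)) (q (g i))" for i
        define \<beta> where "\<beta> i = max (p (g i)) (q (g i))" for i
        have in1: "\<alpha> i \<in> {Inf (g i)..Sup (g i)}" "\<beta> i \<in> {Inf (g i)..Sup (g i)}" if "i < m" for i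
          using pq gC[OF that] by (auto simp: \<alpha>_def \<beta>_def min_def max_def)
        have c1: "\<forall>i<m. \<alpha> i \<le> \<beta> i \<and> {\<alpha> i..\<beta> i} \<subseteq> {a..b}"
        proof (intro allI impI conjI)
          fix i assume i: "i < m"
          show "\<alpha> i \<le> \<beta> i" by (simp add: \<alpha>_def \<beta>_def)
          show "{\<alpha> i..\<beta> i} \<subseteq> {a..b}"
            using in1[OF i] ci(3,4)[OF gC[OF i, unfolded \<C>_def]] by auto
        qed
        have c2: "\<forall>i<m. \<forall>j<m. i \<noteq> j \<longrightarrow> \<beta> i \<le> \<alpha> j \<or> \<beta> j \<le> \<alpha> i"
        proof (intro allI impI)
          fix i j assume ij: "i < m" "j < m" "i \<noteq> j"
          have "Sup (g i) \<le> Inf (g j) \<or> Sup (g j) \<le> Inf (g i)"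
            using components_sep[OF U(1) U(2), of "g i" "g j"] gC ij ginj by (auto simp: \<C>_def)
          then show "\<beta> i \<le> \<alpha> j \<or> \<beta> j \<le> \<alpha> i" using in1[OF ij(1)] in1[OF ij(2)] by auto
        qed
        have c3: "(\<Sum>i<m. \<beta> i - \<alpha> i) < d"
        proof -
          have "(\<Sum>i<m. \<beta> i - \<alpha> i) \<le> (\<Sum>i<m. Sup (g i) - Inf (g i))"
          proof (rule sum_mono)
            fix i assume "i \<in> {..<m}"
            then have "i < m" by simp
            from in1[OF this] show "\<beta> i - \<alpha> i \<le> Sup (g i) - Inf (g i)" by auto
          qed
          also have "\<dots> = (\<Sum>C\<in>\<C>'. Sup C - Inf C)" by (rule reidx[symmetric])
          also have "\<dots> = (\<Sum>C\<in>\<C>'. measure lebesgue C)"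
          proof (rule sum.cong)
            fix C assume "C \<in> \<C>'"
            then have C: "C \<in> components U" using sub by (auto simp: \<C>_def)
            have "measure lebesgue C = measure lebesgue {Inf C<..<Sup C}" using arg_cong[OF ci(2)[OF C], of "measure lebesgue"] .
            also have "\<dots> = Sup C - Inf C" using ci(1)[OF C] by simp
            finally show "Sup C - Inf C = measure lebesgue C" by simp
          qed simp
          also have "\<dots> = measure lebesgue (\<Union>\<C>')"
          proof (rule measure_Union'[symmetric])
            show "finite \<C>'" by (rule sub(2))
            fix C assume "C \<in> \<C>'"
            then have C: "C \<in> components U" using sub by (auto simp: \<C>_def)
            show "C \<in> fmeasurable lebesgue" by (subst ci(2)[OF C]) (rule lmeasurable_interval(2))
          next
            show "pairwise disjnt \<C>'" using sub pairwise_disjoint_components[of U]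
              by (auto simp: \<C>_def pairwise_def disjnt_def)
          qed
          also have "\<dots> \<le> measure lebesgue U"
          proof (rule measure_mono_fmeasurable)
            show "\<Union>\<C>' \<subseteq> U" using sub in_components_subset by (auto simp: \<C>_def)
            have "C \<in> fmeasurable lebesgue" if "C \<in> \<C>'" for C
            proof -
              have C: "C \<in> components U" using sub that by (auto simp: \<C>_def)
              show ?thesis by (subst ci(2)[OF C]) (rule lmeasurable_interval(2))
            qed
            then have "\<Union>\<C>' \<in> fmeasurable lebesgue" using sub(2) by (intro fmeasurable.finite_Union) auto
            then show "\<Union>\<C>' \<in> sets lebesgue" by (rule fmeasurableD)
            show "U \<in> fmeasurable lebesgue" using Ulm .
          qed
          finally show ?thesis using mU by linarith
        qed
        have "(\<Sum>i<m. norm (f (\<beta> i) - f (\<alpha> i))) < e" by (rule H[rule_format, OF conjI[OF c1 conjI[OF c2 c3]]])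
        moreover have "(\<Sum>i<m. norm (f (\<beta> i) - f (\<alpha> i))) = (\<Sum>C\<in>\<C>'. f (q C) - f (p C))"
          unfolding reidx
        proof (rule sum.cong)
          fix i assume "i \<in> {..<m}"
          then have "g i \<in> \<C>" using gC by auto
          then have "f (p (g i)) \<le> f (q (g i))" using pqle by blast
          then show "norm (f (\<beta> i) - f (\<alpha> i)) = f (q (g i)) - f (p (g i))"
            by (auto simp: \<alpha>_def \<beta>_def min_def max_def)
        qed simp
        ultimately show ?thesis by simp
      qed
      finally show ?thesis by simp
    qed
    have Jlm: "J C \<in> fmeasurable lebesgue" for C by (simp add: J_def)
    show "\<exists>T. f ` N' \<subseteq> T \<and> T \<in> lmeasurable \<and> measure lebesgue T \<le> e"
      using cover fmeasurable_UN_bound[OF cnt Jlm bound] measure_UN_bound[OF cnt Jlm bound] by blast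
  qed
  have "N \<inter> {a..b} \<subseteq> N' \<union> {a, b}" by (auto simp: N'_def)
  then have "f ` (N \<inter> {a..b}) \<subseteq> f ` (N' \<union> {a, b})" by (rule image_mono)
  then have "f ` (N \<inter> {a..b}) \<subseteq> f ` N' \<union> {f a, f b}" by simp
  moreover have "negligible (f ` N' \<union> {f a, f b})" using main by (intro negligible_Un) auto
  ultimately show ?thesis using negligible_subset by blast
qed

lemma mono_left_dini:
  fixes \<psi> :: "real \<Rightarrow> real"
  assumes ab: "a \<le> b" and ac: "abs_cont_on {a..b} \<psi>" and N: "negligible N"
    and D: "\<And>s \<eta>. s \<in> {a<..b} \<Longrightarrow> s \<notin> N \<Longrightarrow> \<eta> > 0 \<Longrightarrow>
               eventually (\<lambda>h. \<psi> s - \<psi> (s - h) \<le> \<eta> * h) (at_right 0)"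
  shows "\<psi> b \<le> \<psi> a"
proof (rule ccontr)
  assume "\<not> \<psi> b \<le> \<psi> a"
  hence gt: "\<psi> a < \<psi> b" by simp
  have ab': "a < b" using gt ab by (cases "a = b") auto
  define \<eta>0 where "\<eta>0 = (\<psi> b - \<psi> a) / (2 * (b - a))"
  have \<eta>0: "\<eta>0 > 0" using gt ab' by (simp add: \<eta>0_def)
  define chi where "chi s = \<psi> s - \<eta>0 * s" for s
  have acchi: "abs_cont_on {a..b} chi" unfolding chi_def by (rule abs_cont_minus_linear[OF ac])
  have contchi: "continuous_on {a..b} chi" by (rule abs_cont_imp_continuous[OF acchi])
  have chiab: "chi a < chi b"
  proof -
    have e1: "\<eta>0 * (b - a) = (\<psi> b - \<psi> a) / 2" using ab' by (simp add: \<eta>0_def field_simps)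
    have "chi b - chi a = (\<psi> b - \<psi> a) - \<eta>0 * (b - a)" by (simp add: chi_def algebra_simps)
    also have "\<dots> = (\<psi> b - \<psi> a) / 2" unfolding e1 by (simp add: field_simps)
    finally show ?thesis using gt by simp
  qed
  have negZ: "negligible (chi ` (N \<inter> {a..b}))" by (rule lusin_N[OF acchi N])
  have "\<not> {chi a<..<chi b} \<subseteq> chi ` (N \<inter> {a..b})"
  proof
    assume "{chi a<..<chi b} \<subseteq> chi ` (N \<inter> {a..b})"
    then have "negligible {chi a<..<chi b}" using negZ negligible_subset by blast
    then have "box (chi a) (chi b) = {}" using negligible_interval(2)[of "chi a" "chi b"] by (simp add: box_real)
    then show False using chiab by (simp add: box_real)
  qed
  then obtain c where c0: "c \<in> {chi a<..<chi b}" "c \<notin> chi ` (N \<inter> {a..b})"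
    unfolding subset_iff by blast
  then have c: "chi a < c" "c < chi b" "c \<notin> chi ` (N \<inter> {a..b})" by auto
  define S where "S = {s \<in> {a..b}. c \<le> chi s}"
  have Sne: "b \<in> S" using c ab by (auto simp: S_def)
  have Seq: "S = {a..b} \<inter> chi -` {c..}" by (auto simp: S_def)
  have Scl: "closed S" unfolding Seq by (rule continuous_closed_preimage[OF contchi]) auto
  have Sbd: "bdd_below S" by (rule bdd_belowI[of _ a]) (simp add: S_def)
  define s0 where "s0 = Inf S"
  have s0S: "s0 \<in> S" unfolding s0_def using Sne Sbd Scl by (intro closed_contains_Inf) auto
  have below: "chi s < c" if "a \<le> s" "s < s0" for s
  proof (rule ccontr)
    assume "\<not> chi s < c"
    then have "s \<in> S" using that s0S by (auto simp: S_def)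
    then have "s0 \<le> s" unfolding s0_def using Sbd by (rule cInf_lower)
    then show False using that by simp
  qed
  have s0ab: "a \<le> s0" "s0 \<le> b" "c \<le> chi s0" using s0S by (auto simp: S_def)
  have s0a: "a < s0" using s0ab c(1) by (cases "s0 = a") auto
  have chis0: "chi s0 = c"
  proof (rule ccontr)
    assume "chi s0 \<noteq> c"
    with s0ab have gt: "chi s0 > c" by simp
    have "s0 \<in> {a..b}" using s0ab by simp
    then obtain \<delta> where \<delta>: "\<delta> > 0" "\<forall>s\<in>{a..b}. dist s s0 < \<delta> \<longrightarrow> dist (chi s) (chi s0) < chi s0 - c"
      using contchi[unfolded continuous_on_iff] gt by (meson diff_gt_0_iff_gt)
    define s where "s = max a (s0 - \<delta>/2)"
    have s: "a \<le> s" "s < s0" "s \<in> {a..b}" "dist s s0 < \<delta>"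
      using s0a \<delta>(1) s0ab by (auto simp: s_def dist_real_def)
    have "dist (chi s) (chi s0) < chi s0 - c" using \<delta>(2) s(3,4) by blast
    then have "chi s > c" by (simp add: dist_real_def)
    then show False using below[OF s(1,2)] by simp
  qed
  have s0N: "s0 \<notin> N"
  proof
    assume "s0 \<in> N"
    then have "chi s0 \<in> chi ` (N \<inter> {a..b})" using s0ab by auto
    then show False using c(3) chis0 by simp
  qed
  have s0ab': "s0 \<in> {a<..b}" using s0a s0ab by simp
  have "eventually (\<lambda>h. \<psi> s0 - \<psi> (s0 - h) \<le> (\<eta>0/2) * h) (at_right 0)"
    by (rule D[OF s0ab' s0N]) (use \<eta>0 in simp)
  moreover have "eventually (\<lambda>h. 0 < h \<and> h < s0 - a) (at_right (0::real))"
    by (rule eventually_at_rightI[of 0 "s0 - a"]) (use s0a in auto)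
  ultimately have "eventually (\<lambda>h. \<psi> s0 - \<psi> (s0 - h) \<le> (\<eta>0/2) * h \<and> 0 < h \<and> h < s0 - a) (at_right (0::real))"
    by (rule eventually_conj)
  then obtain h where h: "\<psi> s0 - \<psi> (s0 - h) \<le> (\<eta>0/2) * h" "0 < h" "h < s0 - a"
    using eventually_happens[of _ "at_right (0::real)"] by (auto simp: trivial_limit_at_right_real)
  have "chi (s0 - h) = \<psi> (s0 - h) - \<eta>0 * (s0 - h)" by (simp add: chi_def)
  also have "\<dots> \<ge> \<psi> s0 - (\<eta>0/2) * h - \<eta>0 * s0 + \<eta>0 * h" using h(1) by (simp add: algebra_simps)
  finally have "chi (s0 - h) \<ge> chi s0 + (\<eta>0/2) * h" by (simp add: chi_def algebra_simps)
  moreover have "(\<eta>0/2) * h > 0" using \<eta>0 h(2) by simp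
  moreover have "chi (s0 - h) < c" using below h by simp
  ultimately show False using chis0 by linarith
qed

definition gap :: "(real^'n) set \<Rightarrow> (real^'n \<Rightarrow> real^'n) \<Rightarrow> real^'n \<Rightarrow> real" where
  "gap K F z = (z - (SOME y. y \<in> best_response K (F z))) \<bullet> F z"

lemma br_nonempty:
  fixes K :: "(real^'n) set"
  assumes "compact K" "K \<noteq> {}"
  shows "\<exists>y. y \<in> best_response K p"
proof -
  have "continuous_on K (\<lambda>y. y \<bullet> p)" by (intro continuous_intros)
  then obtain y where "y \<in> K" "\<forall>z\<in>K. y \<bullet> p \<le> z \<bullet> p"
    using continuous_attains_inf[OF assms] by blast
  then show ?thesis unfolding best_response_def by blast
qed

lemma gap_some:
  fixes K :: "(real^'n) set"
  assumes "compact K" "K \<noteq> {}"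
  shows "(SOME y. y \<in> best_response K (F z)) \<in> best_response K (F z)"
  using br_nonempty[OF assms] by (rule someI_ex)

lemma gap_ge:
  fixes K :: "(real^'n) set"
  assumes "compact K" "K \<noteq> {}" "y \<in> K"
  shows "(z - y) \<bullet> F z \<le> gap K F z"
proof -
  define y0 where "y0 = (SOME y. y \<in> best_response K (F z))"
  have "y0 \<in> best_response K (F z)" unfolding y0_def by (rule gap_some[OF assms(1,2)])
  then have "y0 \<bullet> F z \<le> y \<bullet> F z" using assms(3) by (auto simp: best_response_def)
  then show ?thesis unfolding gap_def y0_def[symmetric] by (simp add: inner_diff_left)
qed

lemma gap_eq:
  fixes K :: "(real^'n) set"
  assumes "compact K" "K \<noteq> {}" "y \<in> best_response K (F z)"
  shows "gap K F z = (z - y) \<bullet> F z"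
proof -
  define y0 where "y0 = (SOME y. y \<in> best_response K (F z))"
  have "y0 \<in> best_response K (F z)" unfolding y0_def by (rule gap_some[OF assms(1,2)])
  then have "y0 \<bullet> F z = y \<bullet> F z" using assms(3) by (auto simp: best_response_def intro: antisym)
  then show ?thesis unfolding gap_def y0_def[symmetric] by (simp add: inner_diff_left)
qed

lemma gap_nonneg:
  fixes K :: "(real^'n) set"
  assumes "compact K" "K \<noteq> {}" "z \<in> K"
  shows "0 \<le> gap K F z"
  using gap_ge[OF assms(1,2,3), of z F] by simp

lemma gap_SOL:
  fixes K :: "(real^'n) set"
  assumes "compact K" "K \<noteq> {}" "z \<in> K"
  shows "gap K F z = 0 \<longleftrightarrow> z \<in> SOL K F"
proof
  assume g: "gap K F z = 0"
  have "(y - z) \<bullet> F z \<ge> 0" if "y \<in> K" for y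
    using gap_ge[OF assms(1,2) that, of z F] g by (simp add: inner_diff_left)
  then show "z \<in> SOL K F" using assms(3) by (auto simp: SOL_def)
next
  assume "z \<in> SOL K F"
  then have s: "\<forall>y\<in>K. (y - z) \<bullet> F z \<ge> 0" by (auto simp: SOL_def)
  obtain y where y: "y \<in> best_response K (F z)" using br_nonempty[OF assms(1,2)] by blast
  then have "y \<in> K" by (auto simp: best_response_def)
  then have "(z - y) \<bullet> F z \<le> 0" using s by (auto simp: inner_diff_left)
  then have "gap K F z \<le> 0" using gap_eq[where F=F and z=z, OF assms(1,2) y] by simp
  then show "gap K F z = 0" using gap_nonneg[OF assms, of F] by simp
qed

lemma gap_lipschitz:
  fixes K :: "(real^'n) set"
  assumes "compact K" "K \<noteq> {}" and R: "\<forall>z\<in>K. norm z \<le> R" and MF: "\<forall>z\<in>K. norm (F z) \<le> MF"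
    and L: "\<forall>z\<in>K. \<forall>w\<in>K. norm (F z - F w) \<le> L * norm (z - w)" and "0 \<le> L"
    and "z \<in> K" "w \<in> K"
  shows "gap K F z - gap K F w \<le> (2 * R * L + MF) * norm (z - w)"
proof -
  obtain y where y: "y \<in> best_response K (F z)" using br_nonempty[OF assms(1,2)] by blast
  then have yK: "y \<in> K" by (auto simp: best_response_def)
  have gz: "gap K F z = (z - y) \<bullet> F z" by (rule gap_eq[where F=F and z=z, OF assms(1,2) y])
  have gw: "(w - y) \<bullet> F w \<le> gap K F w" by (rule gap_ge[where F=F and z=w, OF assms(1,2) yK])
  have eq: "(z - y) \<bullet> F z - (w - y) \<bullet> F w = (z - y) \<bullet> (F z - F w) + (z - w) \<bullet> F w"
    by (simp add: inner_diff_left inner_diff_right)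
  have n1: "norm (z - y) \<le> 2 * R"
  proof -
    have "norm z \<le> R" "norm y \<le> R" using R \<open>z \<in> K\<close> yK by auto
    then show ?thesis using norm_triangle_ineq4[of z y] by linarith
  qed
  have "(z - y) \<bullet> (F z - F w) \<le> norm (z - y) * norm (F z - F w)"
    using Cauchy_Schwarz_ineq2[of "z - y" "F z - F w"] by simp
  also have "\<dots> \<le> (2 * R) * (L * norm (z - w))"
  proof (rule mult_mono[OF n1])
    show "norm (F z - F w) \<le> L * norm (z - w)" using L \<open>z \<in> K\<close> \<open>w \<in> K\<close> by blast
    have "norm z \<le> R" using R \<open>z \<in> K\<close> by blast
    then show "0 \<le> 2 * R" using norm_ge_zero[of z] by linarith
  qed simp
  finally have t1: "(z - y) \<bullet> (F z - F w) \<le> 2 * R * L * norm (z - w)" by simp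
  have "(z - w) \<bullet> F w \<le> norm (z - w) * norm (F w)"
    using Cauchy_Schwarz_ineq2[of "z - w" "F w"] by simp
  also have "\<dots> \<le> norm (z - w) * MF"
    by (rule mult_left_mono) (use MF \<open>w \<in> K\<close> in auto)
  finally have t2: "(z - w) \<bullet> F w \<le> MF * norm (z - w)" by (simp add: mult.commute)
  have "gap K F z - gap K F w \<le> (z - y) \<bullet> F z - (w - y) \<bullet> F w" using gz gw by simp
  also have "\<dots> \<le> 2 * R * L * norm (z - w) + MF * norm (z - w)" unfolding eq using t1 t2 by simp
  finally show ?thesis by (simp add: algebra_simps)
qed

lemma F_cont:
  fixes K :: "(real^'n) set"
  assumes U: "open U" "K \<subseteq> U" and FeF: "\<forall>x\<in>K. Fe x = F x"
    and D: "\<forall>x\<in>U. (Fe has_derivative blinfun_apply (F' x)) (at x)"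
  shows "continuous_on K F"
proof -
  have "continuous_on U Fe"
    by (rule has_derivative_continuous_on) (use D in \<open>blast intro: has_derivative_at_withinI\<close>)
  then have "continuous_on K Fe" using continuous_on_subset U(2) by blast
  then show ?thesis using continuous_on_cong[of K K Fe F] FeF by simp
qed

lemma F_lip:
  fixes K :: "(real^'n) set"
  assumes "compact K" "convex K" and U: "open U" "K \<subseteq> U" and FeF: "\<forall>x\<in>K. Fe x = F x"
    and D: "\<forall>x\<in>U. (Fe has_derivative blinfun_apply (F' x)) (at x)" and cF': "continuous_on U F'"
  shows "\<exists>L\<ge>0. \<forall>z\<in>K. \<forall>w\<in>K. norm (F z - F w) \<le> L * norm (z - w)"
proof -
  have "bounded (F' ` K)"
    by (rule compact_imp_bounded[OF compact_continuous_image[OF continuous_on_subset[OF cF' U(2)] assms(1)]])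
  then obtain B where B: "\<forall>x\<in>K. norm (F' x) \<le> B" by (auto simp: bounded_iff)
  have "norm (Fe z - Fe w) \<le> max B 0 * norm (z - w)" if "z \<in> K" "w \<in> K" for z w
  proof -
    have "norm (Fe z - Fe w) \<le> B * norm (z - w)"
    proof (rule differentiable_bound[OF assms(2) _ _ that])
      fix x assume "x \<in> K"
      then show "(Fe has_derivative blinfun_apply (F' x)) (at x within K)"
        using D U(2) by (blast intro: has_derivative_at_withinI)
      show "onorm (blinfun_apply (F' x)) \<le> B" using B \<open>x \<in> K\<close> by (simp add: norm_blinfun.rep_eq[symmetric])
    qed
    also have "\<dots> \<le> max B 0 * norm (z - w)" by (rule mult_right_mono) auto
    finally show ?thesis .
  qed
  then show ?thesis using FeF by (intro exI[of _ "max B 0"]) auto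
qed

lemma F_psd:
  fixes K :: "(real^'n) set"
  assumes "convex K" and U: "open U" "K \<subseteq> U" and FeF: "\<forall>x\<in>K. Fe x = F x"
    and D: "\<forall>x\<in>U. (Fe has_derivative blinfun_apply (F' x)) (at x)"
    and mono: "monotone_on_K K F" and z: "z \<in> K" and y: "y \<in> K"
  shows "0 \<le> (y - z) \<bullet> blinfun_apply (F' z) (y - z)"
proof -
  define v where "v = y - z"
  define Dv where "Dv = v \<bullet> blinfun_apply (F' z) v"
  define q where "q h = v \<bullet> Fe (z + h *\<^sub>R v)" for h :: real
  have Dz: "(Fe has_derivative blinfun_apply (F' z)) (at (z + 0 *\<^sub>R v))" using D U z by auto
  have l: "((\<lambda>h::real. z + h *\<^sub>R v) has_derivative (\<lambda>h. h *\<^sub>R v)) (at 0)"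
    by (auto intro!: derivative_eq_intros)
  have "((\<lambda>h. Fe (z + h *\<^sub>R v)) has_derivative (\<lambda>h. blinfun_apply (F' z) (h *\<^sub>R v))) (at 0)"
    using has_derivative_compose[OF l Dz] by simp
  then have "(q has_derivative (\<lambda>h. v \<bullet> blinfun_apply (F' z) (h *\<^sub>R v))) (at 0)"
    unfolding q_def by (rule has_derivative_inner_right)
  then have "(q has_derivative (*) Dv) (at 0)"
    by (rule has_derivative_eq_rhs) (auto simp: Dv_def blinfun.scaleR_right fun_eq_iff)
  then have "(q has_field_derivative Dv) (at 0 within {0<..})"
    by (simp add: has_field_derivative_def has_derivative_at_withinI)
  then have lim: "((\<lambda>h. (q h - q 0) / (h - 0)) \<longlongrightarrow> Dv) (at_right 0)"
    by (simp add: has_field_derivative_iff)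
  have ev: "eventually (\<lambda>h. 0 \<le> (q h - q 0) / (h - 0)) (at_right (0::real))"
  proof (rule eventually_at_rightI[of 0 1])
    fix h :: real assume h: "h \<in> {0<..<1}"
    have zh: "z + h *\<^sub>R v = (1 - h) *\<^sub>R z + h *\<^sub>R y" by (simp add: v_def algebra_simps)
    have zhK: "z + h *\<^sub>R v \<in> K" unfolding zh using convexD_alt[OF assms(1) z y] h by auto
    have "0 \<le> ((z + h *\<^sub>R v) - z) \<bullet> (F (z + h *\<^sub>R v) - F z)"
      using mono zhK z unfolding monotone_on_K_def by blast
    also have "\<dots> = h * (v \<bullet> (F (z + h *\<^sub>R v) - F z))" by simp
    finally have "0 \<le> v \<bullet> (F (z + h *\<^sub>R v) - F z)" using h by (simp add: zero_le_mult_iff)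
    then have "0 \<le> q h - q 0" using FeF zhK z by (simp add: q_def inner_diff_right)
    then show "0 \<le> (q h - q 0) / (h - 0)" using h by simp
  qed simp
  have "0 \<le> Dv" by (rule tendsto_lowerbound[OF lim ev]) (simp add: trivial_limit_at_right_real)
  then show ?thesis by (simp add: Dv_def v_def)
qed

lemma deriv_g:
  fixes x :: "real \<Rightarrow> real^'n" and Df :: "(real^'n) \<Rightarrow>\<^sub>L (real^'n)"
  assumes xd: "(x has_vector_derivative v) (at s within S)"
    and D: "(Fe has_derivative blinfun_apply Df) (at (x s))"
  shows "((\<lambda>r. exp r * ((x r - b) \<bullet> Fe (x r))) has_real_derivative
           (exp s * ((x s - b) \<bullet> Fe (x s)) + exp s * (v \<bullet> Fe (x s) + (x s - b) \<bullet> blinfun_apply Df v))) (at s within S)"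
proof -
  have x': "(x has_derivative (\<lambda>h. h *\<^sub>R v)) (at s within S)" using xd by (simp add: has_vector_derivative_def)
  have c: "((\<lambda>r. Fe (x r)) has_derivative (\<lambda>h. blinfun_apply Df (h *\<^sub>R v))) (at s within S)"
    using has_derivative_compose[OF x' D] .
  have xb: "((\<lambda>r. x r - b) has_derivative (\<lambda>h. h *\<^sub>R v)) (at s within S)"
    using has_derivative_diff[OF x' has_derivative_const[of b]] by simp
  have q: "((\<lambda>r. (x r - b) \<bullet> Fe (x r)) has_derivative
      (\<lambda>h. (x s - b) \<bullet> blinfun_apply Df (h *\<^sub>R v) + (h *\<^sub>R v) \<bullet> Fe (x s))) (at s within S)"
    using has_derivative_inner[OF xb c] .
  define Dq where "Dq = v \<bullet> Fe (x s) + (x s - b) \<bullet> blinfun_apply Df v"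
  have q': "((\<lambda>r. (x r - b) \<bullet> Fe (x r)) has_real_derivative Dq) (at s within S)"
    unfolding has_field_derivative_def
    by (rule has_derivative_eq_rhs[OF q]) (auto simp: Dq_def blinfun.scaleR_right fun_eq_iff algebra_simps)
  have e: "(exp has_real_derivative exp s) (at s within S)"
    by (rule has_field_derivative_at_within[OF DERIV_exp])
  have "((\<lambda>r. exp r * ((x r - b) \<bullet> Fe (x r))) has_real_derivative
          exp s * ((x s - b) \<bullet> Fe (x s)) + Dq * exp s) (at s within S)"
    using DERIV_mult[OF e q'] by simp
  then show ?thesis by (simp add: Dq_def algebra_simps)
qed

lemma dini_at:
  fixes \<psi> g :: "real \<Rightarrow> real"
  assumes gd: "(g has_real_derivative Dg) (at s within {0..})" and Dg: "Dg \<le> 0" and s: "s > 0"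
    and eq: "\<psi> s = g s" and le: "\<And>r. r \<ge> 0 \<Longrightarrow> g r \<le> \<psi> r" and \<eta>: "\<eta> > 0"
  shows "eventually (\<lambda>h. \<psi> s - \<psi> (s - h) \<le> \<eta> * h) (at_right 0)"
proof -
  have lim: "((\<lambda>y. (g y - g s) / (y - s)) \<longlongrightarrow> Dg) (at s within {0..})"
    using gd by (simp add: has_field_derivative_iff)
  have "Dg < \<eta>" using Dg \<eta> by simp
  from order_tendstoD(2)[OF lim this]
  have "eventually (\<lambda>y. (g y - g s) / (y - s) < \<eta>) (at s within {0..})" .
  then obtain d where d: "d > 0" "\<forall>y\<in>{0..}. y \<noteq> s \<and> dist y s < d \<longrightarrow> (g y - g s) / (y - s) < \<eta>"
    unfolding eventually_at by blast
  show ?thesis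
  proof (rule eventually_at_rightI[of 0 "min d s"])
    fix h assume h: "h \<in> {0<..<min d s}"
    then have y: "s - h \<in> {0..}" "s - h \<noteq> s" "dist (s - h) s < d" by (auto simp: dist_real_def)
    then have q: "(g (s - h) - g s) / ((s - h) - s) < \<eta>" using d(2) by blast
    have "(g (s - h) - g s) / ((s - h) - s) = (g s - g (s - h)) / h"
      using h by (simp add: divide_simps)
    with q have "(g s - g (s - h)) / h < \<eta>" by simp
    then have "g s - g (s - h) < \<eta> * h" using h by (simp add: pos_divide_less_eq)
    moreover have "\<psi> s - \<psi> (s - h) \<le> g s - g (s - h)" using eq le[of "s - h"] y by auto
    ultimately show "\<psi> s - \<psi> (s - h) \<le> \<eta> * h" by simp
  qed (use d s in simp)
qed

lemma exp_diff_le: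
  fixes a b :: real
  assumes "a \<le> b"
  shows "exp b - exp a \<le> exp b * (b - a)"
proof -
  have "1 + (a - b) \<le> exp (a - b)" by (rule exp_ge_add_one_self)
  then have "exp b * (1 + (a - b)) \<le> exp b * exp (a - b)" by (rule mult_left_mono) simp
  also have "exp b * exp (a - b) = exp a" by (simp add: exp_add[symmetric])
  finally show ?thesis by (simp add: algebra_simps)
qed

lemma ac_psi:
  fixes x :: "real \<Rightarrow> real^'n" and \<phi> :: "real^'n \<Rightarrow> real"
  assumes ac: "abs_cont_on {0..T} x" and xK: "\<And>r. r \<in> {0..T} \<Longrightarrow> x r \<in> K"
    and lip: "\<And>z w. z \<in> K \<Longrightarrow> w \<in> K \<Longrightarrow> \<bar>\<phi> z - \<phi> w\<bar> \<le> Lg * norm (z - w)" and Lg: "0 \<le> Lg"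
    and bd: "\<And>z. z \<in> K \<Longrightarrow> \<bar>\<phi> z\<bar> \<le> M" and M: "0 \<le> M"
  shows "abs_cont_on {0..T} (\<lambda>r. exp r * \<phi> (x r))"
proof (rule abs_cont_onI)
  fix e :: real assume e: "e > 0"
  define E where "E = exp T"
  have E: "E > 0" by (simp add: E_def)
  have ELg: "0 \<le> E * Lg" using E Lg by simp
  have ME: "0 \<le> M * E" using E M by simp
  define e1 where "e1 = e / (2 * (E * Lg + 1))"
  have e1: "e1 > 0" using e ELg by (simp add: e1_def)
  obtain d1 where d1: "d1 > 0" and H: "\<forall>(m::nat) \<alpha> \<beta>. (\<forall>i<m. \<alpha> i \<le> \<beta> i \<and> {\<alpha> i..\<beta> i} \<subseteq> {0..T}) \<and>
        (\<forall>i<m. \<forall>j<m. i \<noteq> j \<longrightarrow> \<beta> i \<le> \<alpha> j \<or> \<beta> j \<le> \<alpha> i) \<and>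
        (\<Sum>i<m. \<beta> i - \<alpha> i) < d1 \<longrightarrow> (\<Sum>i<m. norm (x (\<beta> i) - x (\<alpha> i))) < e1"
    using abs_cont_onD2[OF ac e1] by blast
  define e2 where "e2 = e / (2 * (M * E + 1))"
  have e2: "e2 > 0" using e ME by (simp add: e2_def)
  define d where "d = min d1 e2"
  show "\<exists>d>0. \<forall>(m::nat) a b. (\<forall>i<m. a i \<le> b i \<and> {a i..b i} \<subseteq> {0..T}) \<and>
        (\<forall>i<m. \<forall>j<m. i \<noteq> j \<longrightarrow> b i \<le> a j \<or> b j \<le> a i) \<and>
        (\<Sum>i<m. b i - a i) < d \<longrightarrow>
        (\<Sum>i<m. norm (exp (b i) * \<phi> (x (b i)) - exp (a i) * \<phi> (x (a i)))) < e"
  proof (intro exI[of _ d] conjI allI impI)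
    show "d > 0" using d1 e2 by (simp add: d_def)
    fix m :: nat and \<alpha> \<beta> :: "nat \<Rightarrow> real"
    assume A: "(\<forall>i<m. \<alpha> i \<le> \<beta> i \<and> {\<alpha> i..\<beta> i} \<subseteq> {0..T}) \<and>
        (\<forall>i<m. \<forall>j<m. i \<noteq> j \<longrightarrow> \<beta> i \<le> \<alpha> j \<or> \<beta> j \<le> \<alpha> i) \<and> (\<Sum>i<m. \<beta> i - \<alpha> i) < d"
    have s1: "(\<Sum>i<m. norm (x (\<beta> i) - x (\<alpha> i))) < e1"
      using A by (intro acH[OF H]) (auto simp: d_def)
    have s2: "(\<Sum>i<m. \<beta> i - \<alpha> i) < e2" using A by (simp add: d_def)
    have tm: "norm (exp (\<beta> i) * \<phi> (x (\<beta> i)) - exp (\<alpha> i) * \<phi> (x (\<alpha> i)))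
        \<le> E * Lg * norm (x (\<beta> i) - x (\<alpha> i)) + M * E * (\<beta> i - \<alpha> i)" if i: "i < m" for i
    proof -
      have ab: "\<alpha> i \<le> \<beta> i" "{\<alpha> i..\<beta> i} \<subseteq> {0..T}" using A i by auto
      then have ab2: "0 \<le> \<alpha> i" "\<beta> i \<le> T" by auto
      have K: "x (\<alpha> i) \<in> K" "x (\<beta> i) \<in> K" using xK ab ab2 by auto
      have eq: "exp (\<beta> i) * \<phi> (x (\<beta> i)) - exp (\<alpha> i) * \<phi> (x (\<alpha> i)) =
          exp (\<beta> i) * (\<phi> (x (\<beta> i)) - \<phi> (x (\<alpha> i))) + (exp (\<beta> i) - exp (\<alpha> i)) * \<phi> (x (\<alpha> i))"
        by (simp add: algebra_simps)
      have eb: "exp (\<beta> i) \<le> E" using ab2 by (simp add: E_def)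
      have t1: "\<bar>exp (\<beta> i) * (\<phi> (x (\<beta> i)) - \<phi> (x (\<alpha> i)))\<bar> \<le> E * (Lg * norm (x (\<beta> i) - x (\<alpha> i)))"
        unfolding abs_mult by (rule mult_mono) (use eb lip[OF K(2) K(1)] E in auto)
      have d0: "0 \<le> exp (\<beta> i) - exp (\<alpha> i)" using ab by simp
      have "exp (\<beta> i) - exp (\<alpha> i) \<le> exp (\<beta> i) * (\<beta> i - \<alpha> i)" by (rule exp_diff_le[OF ab(1)])
      also have "\<dots> \<le> E * (\<beta> i - \<alpha> i)" by (rule mult_right_mono) (use eb ab in auto)
      finally have d1': "exp (\<beta> i) - exp (\<alpha> i) \<le> E * (\<beta> i - \<alpha> i)" .
      have t2: "\<bar>(exp (\<beta> i) - exp (\<alpha> i)) * \<phi> (x (\<alpha> i))\<bar> \<le> (E * (\<beta> i - \<alpha> i)) * M"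
        unfolding abs_mult by (rule mult_mono) (use d0 d1' bd[OF K(1)] E ab in auto)
      have "norm (exp (\<beta> i) * \<phi> (x (\<beta> i)) - exp (\<alpha> i) * \<phi> (x (\<alpha> i)))
          \<le> \<bar>exp (\<beta> i) * (\<phi> (x (\<beta> i)) - \<phi> (x (\<alpha> i)))\<bar> + \<bar>(exp (\<beta> i) - exp (\<alpha> i)) * \<phi> (x (\<alpha> i))\<bar>"
        unfolding real_norm_def eq by (rule abs_triangle_ineq)
      also have "\<dots> \<le> E * (Lg * norm (x (\<beta> i) - x (\<alpha> i))) + (E * (\<beta> i - \<alpha> i)) * M"
        using t1 t2 by linarith
      finally show ?thesis by (simp add: algebra_simps)
    qed
    have "(\<Sum>i<m. norm (exp (\<beta> i) * \<phi> (x (\<beta> i)) - exp (\<alpha> i) * \<phi> (x (\<alpha> i))))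
        \<le> (\<Sum>i<m. E * Lg * norm (x (\<beta> i) - x (\<alpha> i)) + M * E * (\<beta> i - \<alpha> i))"
      by (rule sum_mono) (use tm in auto)
    also have "\<dots> = E * Lg * (\<Sum>i<m. norm (x (\<beta> i) - x (\<alpha> i))) + M * E * (\<Sum>i<m. \<beta> i - \<alpha> i)"
      by (simp add: sum.distrib sum_distrib_left)
    also have "E * Lg * (\<Sum>i<m. norm (x (\<beta> i) - x (\<alpha> i))) \<le> E * Lg * e1"
      by (rule mult_left_mono) (use s1 ELg in auto)
    also have "M * E * (\<Sum>i<m. \<beta> i - \<alpha> i) \<le> M * E * e2"
      by (rule mult_left_mono) (use s2 ME in auto)
    also have "E * Lg * e1 < e / 2"
    proof -
      have "E * Lg * e1 = (e / 2) * (E * Lg / (E * Lg + 1))" using ELg by (simp add: e1_def field_simps)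
      also have "\<dots> < (e / 2) * 1" using ELg e by (intro mult_strict_left_mono) auto
      finally show ?thesis by simp
    qed
    also have "M * E * e2 \<le> e / 2"
    proof -
      have "M * E * e2 = (e / 2) * (M * E / (M * E + 1))" using ME by (simp add: e2_def field_simps)
      also have "\<dots> \<le> (e / 2) * 1" using ME e by (intro mult_left_mono) auto
      finally show ?thesis by simp
    qed
    finally show "(\<Sum>i<m. norm (exp (\<beta> i) * \<phi> (x (\<beta> i)) - exp (\<alpha> i) * \<phi> (x (\<alpha> i)))) < e" by simp
  qed
qed

lemma infdist_less_ex:
  fixes A :: "'a::metric_space set"
  assumes "A \<noteq> {}" "infdist x A < d"
  shows "\<exists>a\<in>A. dist x a < d"
proof -
  have "bdd_below ((\<lambda>a. dist x a) ` A)" by (rule bdd_belowI[of _ 0]) auto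
  then show ?thesis using assms by (simp add: infdist_notempty cINF_less_iff)
qed

lemma level_set:
  fixes K :: "(real^'n) set"
  assumes cK: "compact K" and ne: "K \<noteq> {}" and gcont: "continuous_on K (gap K F)" and e: "e > 0"
  shows "\<exists>\<eta>>0. \<forall>z\<in>K. gap K F z < \<eta> \<longrightarrow> infdist z (SOL K F) < e"
proof -
  define K' where "K' = K \<inter> {z. e \<le> infdist z (SOL K F)}"
  show ?thesis
  proof (cases "K' = {}")
    case True
    then show ?thesis by (intro exI[of _ 1]) (auto simp: K'_def not_le)
  next
    case False
    have "closed {z. e \<le> infdist z (SOL K F)}"
      by (rule closed_Collect_le) (auto intro: continuous_on_infdist[OF continuous_on_id])
    then have cK': "compact K'" unfolding K'_def using cK by blast
    have "continuous_on K' (gap K F)" using continuous_on_subset[OF gcont] by (auto simp: K'_def)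
    then obtain z1 where z1: "z1 \<in> K'" "\<forall>z\<in>K'. gap K F z1 \<le> gap K F z"
      using continuous_attains_inf[OF cK' False] by blast
    have z1K: "z1 \<in> K" using z1 by (auto simp: K'_def)
    have pos: "gap K F z1 > 0"
    proof -
      have "gap K F z1 \<noteq> 0"
      proof
        assume "gap K F z1 = 0"
        then have "z1 \<in> SOL K F" using gap_SOL[OF cK ne z1K] by simp
        then have "infdist z1 (SOL K F) = 0" by simp
        then show False using z1 e by (auto simp: K'_def)
      qed
      then show ?thesis using gap_nonneg[OF cK ne z1K, of F] by simp
    qed
    show ?thesis
    proof (intro exI[of _ "gap K F z1"] conjI pos ballI impI)
      fix z assume z: "z \<in> K" "gap K F z < gap K F z1"
      show "infdist z (SOL K F) < e"
      proof (rule ccontr)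
        assume "\<not> infdist z (SOL K F) < e"
        then have "z \<in> K'" using z by (auto simp: K'_def)
        then show False using z1(2) z(2) by force
      qed
    qed
  qed
qed

theorem theorem1:
  fixes K :: "(real^'n) set" and F :: "real^'n \<Rightarrow> real^'n"
  assumes "K \<noteq> {}" and "compact K" and "convex K"
    and "C1_on K F"
    and "monotone_on_K K F"
  shows "BR_GAS K F (SOL K F)"
proof -
  note ne = assms(1) and cK = assms(2) and cvx = assms(3) and mono = assms(5)
  obtain U Fe F' where U: "open U" "K \<subseteq> U" and FeF: "\<forall>x\<in>K. Fe x = F x"
    and D: "\<forall>x\<in>U. (Fe has_derivative blinfun_apply (F' x)) (at x)" and cF': "continuous_on U F'"
    using assms(4) unfolding C1_on_def by blast
  have contF: "continuous_on K F" by (rule F_cont[OF U FeF D])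
  obtain L where L0: "0 \<le> L" and L: "\<forall>z\<in>K. \<forall>w\<in>K. norm (F z - F w) \<le> L * norm (z - w)"
    using F_lip[OF cK cvx U FeF D cF'] by blast
  obtain R where R: "\<forall>z\<in>K. norm z \<le> R" using compact_imp_bounded[OF cK] by (auto simp: bounded_iff)
  obtain MF where MF: "\<forall>z\<in>K. norm (F z) \<le> MF"
    using compact_imp_bounded[OF compact_continuous_image[OF contF cK]] by (auto simp: bounded_iff)
  obtain z0 where z0: "z0 \<in> K" using ne by blast
  have R0: "0 \<le> R"
  proof -
    have "norm z0 \<le> R" using R z0 by blast
    then show ?thesis using norm_ge_zero[of z0] by linarith
  qed
  have MF0: "0 \<le> MF"
  proof -
    have "norm (F z0) \<le> MF" using MF z0 by blast
    then show ?thesis using norm_ge_zero[of "F z0"] by linarith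
  qed
  define Lg where "Lg = 2 * R * L + MF"
  have Lg0: "0 \<le> Lg" using R0 L0 MF0 by (simp add: Lg_def)
  have glip: "\<bar>gap K F z - gap K F w\<bar> \<le> Lg * norm (z - w)" if "z \<in> K" "w \<in> K" for z w
  proof -
    have "gap K F z - gap K F w \<le> Lg * norm (z - w)"
      using gap_lipschitz[OF cK ne R MF L L0 that] by (simp add: Lg_def)
    moreover have "gap K F w - gap K F z \<le> Lg * norm (z - w)"
      using gap_lipschitz[OF cK ne R MF L L0 that(2,1)] by (simp add: Lg_def norm_minus_commute)
    ultimately show ?thesis by (simp add: abs_le_iff)
  qed
  define MG where "MG = 2 * R * MF"
  have MG0: "0 \<le> MG" using R0 MF0 by (simp add: MG_def)
  have gbd: "\<bar>gap K F z\<bar> \<le> MG" if z: "z \<in> K" for z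
  proof -
    obtain y where y: "y \<in> best_response K (F z)" using br_nonempty[OF cK ne] by blast
    then have yK: "y \<in> K" by (auto simp: best_response_def)
    have "gap K F z = (z - y) \<bullet> F z" by (rule gap_eq[where F=F and z=z, OF cK ne y])
    also have "\<dots> \<le> norm (z - y) * norm (F z)" using Cauchy_Schwarz_ineq2[of "z - y" "F z"] by simp
    also have "\<dots> \<le> (2 * R) * MF"
    proof (rule mult_mono)
      have "norm z \<le> R" "norm y \<le> R" using R z yK by auto
      then show "norm (z - y) \<le> 2 * R" using norm_triangle_ineq4[of z y] by linarith
      show "norm (F z) \<le> MF" using MF z by auto
    qed (use R0 in auto)
    finally have "gap K F z \<le> MG" by (simp add: MG_def)
    then show ?thesis using gap_nonneg[OF cK ne z, of F] by simp
  qed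
  have gcont: "continuous_on K (gap K F)"
  proof (rule lipschitz_on_continuous_on)
    show "Lg-lipschitz_on K (gap K F)"
      by (rule lipschitz_onI) (use glip Lg0 in \<open>auto simp: dist_real_def dist_norm\<close>)
  qed
  have decay: "exp t * gap K F (x t) \<le> gap K F (x 0)" if sol: "BR_solution K F x" and t: "t \<ge> 0" for x t
  proof -
    have xK: "\<forall>t\<ge>0. x t \<in> K" and xac: "\<forall>T\<ge>0. abs_cont_on {0..T} x"
      using sol by (auto simp: BR_solution_def)
    obtain N where N: "N \<in> null_sets lborel" and ND: "\<forall>t. t \<ge> 0 \<and> t \<notin> N \<longrightarrow>
           (\<exists>v. (x has_vector_derivative v) (at t within {0..}) \<and>
                v \<in> (\<lambda>y. y - x t) ` best_response K (F (x t)))"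
      using sol unfolding BR_solution_def by blast
    define \<psi> where "\<psi> r = exp r * gap K F (x r)" for r
    have "\<psi> t \<le> \<psi> 0"
    proof (rule mono_left_dini[of 0 t \<psi> N])
      show "0 \<le> t" by (rule t)
      show "abs_cont_on {0..t} \<psi>" unfolding \<psi>_def
      proof (rule ac_psi[of t x K "gap K F" Lg MG])
        show "abs_cont_on {0..t} x" using xac t by blast
        show "x r \<in> K" if "r \<in> {0..t}" for r using xK that by auto
        show "\<bar>gap K F z - gap K F w\<bar> \<le> Lg * norm (z - w)" if "z \<in> K" "w \<in> K" for z w
          by (rule glip[OF that])
        show "\<bar>gap K F z\<bar> \<le> MG" if "z \<in> K" for z by (rule gbd[OF that])
      qed (use Lg0 MG0 in auto)
      show "negligible N" using N by (simp add: negligible_iff_null_sets null_sets_completionI)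
      fix s \<eta> :: real assume s: "s \<in> {0<..t}" "s \<notin> N" and \<eta>: "\<eta> > 0"
      obtain v where v: "(x has_vector_derivative v) (at s within {0..})"
          "v \<in> (\<lambda>y. y - x s) ` best_response K (F (x s))"
        using ND[rule_format, of s] s by auto
      then obtain b where b: "b \<in> best_response K (F (x s))" "v = b - x s" by auto
      have bK: "b \<in> K" using b by (auto simp: best_response_def)
      have xsK: "x s \<in> K" using xK s by auto
      have Dx: "(Fe has_derivative blinfun_apply (F' (x s))) (at (x s))" using D U xsK by auto
      define g where "g r = exp r * ((x r - b) \<bullet> Fe (x r))" for r
      have gd: "(g has_real_derivative (exp s * ((x s - b) \<bullet> Fe (x s)) +
                 exp s * (v \<bullet> Fe (x s) + (x s - b) \<bullet> blinfun_apply (F' (x s)) v))) (at s within {0..})"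
        unfolding g_def by (rule deriv_g[OF v(1) Dx])
      have Dle: "exp s * ((x s - b) \<bullet> Fe (x s)) +
                 exp s * (v \<bullet> Fe (x s) + (x s - b) \<bullet> blinfun_apply (F' (x s)) v) \<le> 0"
      proof -
        have psd: "0 \<le> v \<bullet> blinfun_apply (F' (x s)) v"
          using F_psd[OF cvx U FeF D mono xsK bK] b(2) by simp
        have xb: "x s - b = - v" using b(2) by simp
        have "exp s * ((x s - b) \<bullet> Fe (x s)) +
                 exp s * (v \<bullet> Fe (x s) + (x s - b) \<bullet> blinfun_apply (F' (x s)) v)
              = - (exp s * (v \<bullet> blinfun_apply (F' (x s)) v))"
          unfolding xb by (simp add: algebra_simps)
        also have "\<dots> \<le> 0" using psd by simp
        finally show ?thesis .
      qed
      show "eventually (\<lambda>h. \<psi> s - \<psi> (s - h) \<le> \<eta> * h) (at_right 0)"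
      proof (rule dini_at[OF gd Dle])
        show "0 < s" using s by simp
        show "\<psi> s = g s"
          using gap_eq[where F=F and z="x s", OF cK ne b(1)] FeF xsK by (simp add: \<psi>_def g_def)
        show "g r \<le> \<psi> r" if "0 \<le> r" for r
        proof -
          have xrK: "x r \<in> K" using xK that by auto
          have "(x r - b) \<bullet> Fe (x r) \<le> gap K F (x r)"
            using gap_ge[where F=F and z="x r", OF cK ne bK] FeF xrK by simp
          then show ?thesis unfolding g_def \<psi>_def by (rule mult_left_mono) simp
        qed
        show "0 < \<eta>" by (rule \<eta>)
      qed
    qed
    then show ?thesis by (simp add: \<psi>_def)
  qed
  have gdec: "gap K F (x t) \<le> gap K F (x 0)" if sol: "BR_solution K F x" and t: "t \<ge> 0" for x t
  proof -
    have xtK: "x t \<in> K" using sol t by (auto simp: BR_solution_def)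
    have g0: "0 \<le> gap K F (x t)" by (rule gap_nonneg[OF cK ne xtK])
    have "1 * gap K F (x t) \<le> exp t * gap K F (x t)" by (rule mult_right_mono) (use t g0 in auto)
    then show ?thesis using decay[OF sol t] by simp
  qed
  show ?thesis unfolding BR_GAS_def
  proof (intro conjI allI impI)
    fix e :: real assume e: "e > 0"
    obtain \<eta> where \<eta>: "\<eta> > 0" and lev: "\<forall>z\<in>K. gap K F z < \<eta> \<longrightarrow> infdist z (SOL K F) < e"
      using level_set[OF cK ne gcont e] by blast
    show "\<exists>d>0. \<forall>x. BR_solution K F x \<and> infdist (x 0) (SOL K F) < d \<longrightarrow>
              (\<forall>t\<ge>0. infdist (x t) (SOL K F) < e)"
    proof (cases "SOL K F = {}")
      case True
      then show ?thesis using e by (intro exI[of _ 1]) (auto simp: infdist_def)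
    next
      case False
      define d where "d = \<eta> / (Lg + 1)"
      have d: "d > 0" using \<eta> Lg0 by (simp add: d_def)
      show ?thesis
      proof (intro exI[of _ d] conjI d allI impI)
        fix x and t :: real assume A: "BR_solution K F x \<and> infdist (x 0) (SOL K F) < d" and t: "0 \<le> t"
        have sol: "BR_solution K F x" using A by simp
        have x0K: "x 0 \<in> K" using sol by (auto simp: BR_solution_def)
        have xtK: "x t \<in> K" using sol t by (auto simp: BR_solution_def)
        obtain w where w: "w \<in> SOL K F" "dist (x 0) w < d" using infdist_less_ex[OF False] A by blast
        have wK: "w \<in> K" using w by (auto simp: SOL_def)
        have gw: "gap K F w = 0" using gap_SOL[OF cK ne wK] w(1) by simp
        have "gap K F (x 0) \<le> Lg * norm (x 0 - w)" using glip[OF x0K wK] gw by simp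
        also have "\<dots> \<le> Lg * d" using w(2) Lg0 by (intro mult_left_mono) (auto simp: dist_norm)
        also have "\<dots> < \<eta>"
        proof -
          have "Lg * d = \<eta> * (Lg / (Lg + 1))" using Lg0 by (simp add: d_def field_simps)
          also have "\<dots> < \<eta> * 1" using Lg0 \<eta> by (intro mult_strict_left_mono) auto
          finally show ?thesis by simp
        qed
        finally have "gap K F (x 0) < \<eta>" .
        then have "gap K F (x t) < \<eta>" using gdec[OF sol t] by simp
        then show "infdist (x t) (SOL K F) < e" using lev xtK by blast
      qed
    qed
  next
    fix x assume sol: "BR_solution K F x"
    show "((\<lambda>t. infdist (x t) (SOL K F)) \<longlongrightarrow> 0) at_top"
      unfolding tendsto_iff
    proof (intro allI impI)
      fix e :: real assume e: "e > 0"
      obtain \<eta> where \<eta>: "\<eta> > 0" and lev: "\<forall>z\<in>K. gap K F z < \<eta> \<longrightarrow> infdist z (SOL K F) < e"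
        using level_set[OF cK ne gcont e] by blast
      define G0 where "G0 = gap K F (x 0)"
      have "\<forall>t::real. t \<ge> G0 / \<eta> + 1 \<longrightarrow> dist (infdist (x t) (SOL K F)) 0 < e"
      proof (intro allI impI)
        fix t assume t: "G0 / \<eta> + 1 \<le> t"
        have x0K: "x 0 \<in> K" using sol by (auto simp: BR_solution_def)
        have G0: "0 \<le> G0" unfolding G0_def by (rule gap_nonneg[OF cK ne x0K])
        have t0: "0 \<le> t" using t G0 \<eta> by (smt (verit) divide_nonneg_pos)
        have xtK: "x t \<in> K" using sol t0 by (auto simp: BR_solution_def)
        have gt0: "0 \<le> gap K F (x t)" by (rule gap_nonneg[OF cK ne xtK])
        have "gap K F (x t) * (1 + t) \<le> gap K F (x t) * exp t"
          by (rule mult_left_mono[OF exp_ge_add_one_self gt0])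
        also have "\<dots> \<le> G0" using decay[OF sol t0] by (simp add: G0_def mult.commute)
        also have "G0 < \<eta> * (1 + t)"
        proof -
          have "G0 = \<eta> * (G0 / \<eta>)" using \<eta> by simp
          also have "\<dots> < \<eta> * (1 + t)" using t \<eta> by (intro mult_strict_left_mono) auto
          finally show ?thesis .
        qed
        finally have "gap K F (x t) < \<eta>" using t0 by (simp add: mult_less_cancel_right_pos)
        then have "infdist (x t) (SOL K F) < e" using lev xtK by blast
        then show "dist (infdist (x t) (SOL K F)) 0 < e" using infdist_nonneg[of "x t" "SOL K F"] by (simp add: dist_real_def)
      qed
      then show "eventually (\<lambda>t. dist (infdist (x t) (SOL K F)) 0 < e) at_top"
        unfolding eventually_at_top_linorder by blast
    qed
  qed
qed

end
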